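(* In the tracking setting, fix $k\geq0$. If $\|s_{k+1}-s_k\|_2<r_B$, $\|\bar w_k-w^\ast_k\|_2<q_B\rho$ and $$\Big(1+\frac{\lambda_H\lambda_B}{\rho}\Big)\|\bar w_k-w^\ast_k\|_2+\lambda_H\lambda_B r_B<\delta,$$ then $$\|\bar w_{k+1}-w^\infty_k\|_2\leq C(1+\rho\lambda_G)M^{-\psi}\Big(\lambda_B\lambda_H\|s_{k+1}-s_k\|_2+\Big(1+\frac{\lambda_B\lambda_H}{\rho}\Big)\|\bar w_k-w^\ast_k\|_2\Big).$$
   Context: Problem data: $z=(z_1,\dots,z_P)\in\mathbb{R}^{n_z}$; $\mathcal{Z}=\mathcal{Z}_1\times\cdots\times\mathcal{Z}_P$ a product of nonempty bounded boxes; $J(z)=\sum_iJ_i(z_i)$ with polynomials $J_i$; polynomial maps $Q_c:\mathbb{R}^{n_z}\to\mathbb{R}^m$, $g_i:\mathbb{R}^{n_i}\to\mathbb{R}^{q_i}$; $T_i\in\mathbb{R}^{q_i\times p}$; $q=\sum q_i$; $\mathcal{S}\subseteq\mathbb{R}^p$; $G(z,s)=(Q_c(z),g_1(z_1)+T_1s,\dots,g_P(z_P)+T_Ps)$; $L_\rho(z,\mu,s)=J(z)+(\mu+\frac\rho2G(z,s))^\top G(z,s)$; for $w=(z,\mu)$, $F(w,s)=(\nabla J(z)+\nabla_zG(z,s)^\top\mu,\ G(z,s))$; $\mathcal{N}:=\mathcal{N}_{\mathcal{Z}\times\mathbb{R}^{m+q}}$. A KKT point of $(P_s)$: $\min J(z)$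 s.t. $G(z,s)=0$, $z\in\mathcal{Z}$, is $w$ with $0\in F(w,s)+\mathcal{N}(w)$. For a reference multiplier $\tilde\mu$: $H^{\tilde\mu}_\rho(w,d,s):=(\nabla J(z)+\nabla_zG(z,s)^\top\mu,\ G(z,s)+d+(\tilde\mu-\mu)/\rho)$. Constants: $\lambda_F:=P\max_i\|T_i\|_2$; $\lambda_H>0$ with $\|H^{\tilde\mu}_\rho(w,d,s)-H^{\tilde\mu}_\rho(w,d',s')\|\le\lambda_H\|(d,s)-(d',s')\|$ for all arguments; $\lambda_G>0$ a Lipschitz constant of $z\mapsto G(z,s)$ on $\mathcal{Z}$ (independent of $s$). Primal sweep on $L_\rho(\cdot,\mu,s)$: block-coordinate projected-gradient pass over $i=1,\dots,P$ in order, each block update $z_i\leftarrow\pi_{\mathcal{Z}_i}(z_i-\frac1{c_i}\nabla_{z_i}L_\rho)$ (gradient evaluated with already updated preceding blocks) with curvature $c_i$ obtained by backtracking (multiply by $\beta>1$ from an initial $c_i^0>0$) until $f(u)+\frac{\alpha_i}2\|u-z_i\|^2\le f(z_i)+\nabla f(z_i)^\top(u-z_i)+\frac{c_i}2\|u-z_i\|^2$ for the block function $f$, with $\alpha_i>0$. Tracking setting: fix $\rho>0$, $M\ge1$. Given parameters $(s_k)_{k\ge0}\subset\mathcal{S}$ and KKT points $w^\ast_k=(z^\ast_k,\mu^\ast_k)$ of $(P_{s_k})$. Iterates $\bar w_k=(\bar z_k,\bar\mu_k)$ with $\bar z_k\in\mathcal{Z}$ are produced by: $\bar z_{k+1}$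 = result of $M$ successive primal sweeps on $L_\rho(\cdot,\bar\mu_k,s_{k+1})$ started at $\bar z_k$; $\bar\mu_{k+1}=\bar\mu_k+\rho G(\bar z_{k+1},s_{k+1})$. Let $z^\infty_k$ be the limit of infinitely many sweeps on $L_\rho(\cdot,\bar\mu_k,s_{k+1})$ started at $\bar z_k$, and $w^\infty_k:=(z^\infty_k,\ \bar\mu_k+\rho G(z^\infty_k,s_{k+1}))$; $d_k:=(\bar\mu_k-\mu^\ast_k)/\rho$. Standing hypotheses, for every $k$: (A) there are constants $r_A,\delta_A,\lambda_A>0$ (independent of $k$) such that for every $s\in\mathcal{B}(s_k,r_A)\cap\mathcal{S}$ there is a unique $w^\ast(s)\in\mathcal{B}(w^\ast_k,\delta_A)$ with $0\in F(w^\ast(s),s)+\mathcal{N}(w^\ast(s))$, for all $s,s'\in\mathcal{B}(s_k,r_A)\cap\mathcal{S}$ one has $\|w^\ast(s)-w^\ast(s')\|\le\lambda_A\|F(w^\ast(s'),s)-F(w^\ast(s'),s')\|$, and $w^\ast_{k+1}=w^\ast(s_{k+1})$ whenever $\|s_{k+1}-s_k\|<r_A$; (B) there are constants $r_B,q_B,\lambda_B>0$ and $\delta_B\ge\delta_A$ (independent of $k$) such that for all $d\in\mathcal{B}(0,q_B)$, $s\in\mathcal{B}(s_k,r_B)\cap\mathcal{S}$ there is a unique $w^\ast_k(d,s)\in\mathcal{B}(w^\ast_k,\delta_B)$ with $0\in H^{\mu^\ast_k}_\rho(w^\ast_k(d,s),d,s)+\mathcal{N}(w^\ast_k(d,s))$,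 and $\|w^\ast_k(d,s)-w^\ast_k(d',s')\|\le\lambda_B\|H^{\mu^\ast_k}_\rho(w^\ast_k(d',s'),d,s)-H^{\mu^\ast_k}_\rho(w^\ast_k(d',s'),d',s')\|$ for all such $d,d',s,s'$; (C) there are constants $C>0$, $\delta>0$, $\psi>0$ (independent of $k$) such that the sequence of sweeps defining $z^\infty_k$ converges, $w^\infty_k=w^\ast_k(d_k,s_{k+1})$ whenever $d_k\in\mathcal{B}(0,q_B)$ and $\|s_{k+1}-s_k\|<r_B$, and if $\|\bar z_k-z^\infty_k\|<\delta$ then $\|\bar z_{k+1}-z^\infty_k\|\le CM^{-\psi}\|\bar z_k-z^\infty_k\|$. (In the paper, $\psi=\psi(d_L,n_z)=1/(d_L(3d_L-3)^{n_z-1}-2)$ with $d_L$ the degree of the augmented Lagrangian.) *)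

theory Defs
  imports "HOL-Analysis.Analysis"
begin

text \<open>Block structure: coordinates of z in R^{n_z} (index type 'n) are partitioned into
  blocks 0..P-1 by blk; constraint coordinates (index type 'c, total m+q) are partitioned
  by cblk: cblk c = 0 for the m components of Q_c, cblk c = i+1 for the q_i components of
  g_i(z_i) + T_i s.\<close>

definition blockproj :: "('n::finite \<Rightarrow> nat) \<Rightarrow> nat \<Rightarrow> real^'n \<Rightarrow> real^'n" where
  "blockproj blk i z = (\<chi> j. if blk j = i then z$j else 0)"

definition grad :: "(real^'n::finite \<Rightarrow> real) \<Rightarrow> real^'n \<Rightarrow> real^'n" where
  "grad f z = (\<chi> j. frechet_derivative f (at z) (axis j 1))"

definition normal_cone :: "'a::real_inner set \<Rightarrow> 'a \<Rightarrow> 'a set" where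
  "normal_cone X x = (if x \<in> X then {v. \<forall>y\<in>X. inner v (y - x) \<le> 0} else {})"

definition Gmap :: "(real^'n::finite \<Rightarrow> real^'c::finite) \<Rightarrow> (nat \<Rightarrow> real^'n \<Rightarrow> real^'c)
    \<Rightarrow> (nat \<Rightarrow> real^'p::finite^'c) \<Rightarrow> ('n \<Rightarrow> nat) \<Rightarrow> ('c \<Rightarrow> nat)
    \<Rightarrow> real^'n \<Rightarrow> real^'p \<Rightarrow> real^'c" where
  "Gmap Qc g T blk cblk z s =
     (\<chi> c. if cblk c = 0 then Qc z $ c
           else (g (cblk c - 1) (blockproj blk (cblk c - 1) z) + T (cblk c - 1) *v s) $ c)"

definition Lagr :: "(real^'n::finite \<Rightarrow> real) \<Rightarrow> (real^'n \<Rightarrow> real^'p \<Rightarrow> real^'c::finite)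
    \<Rightarrow> real \<Rightarrow> real^'n \<Rightarrow> real^'c \<Rightarrow> real^'p \<Rightarrow> real" where
  "Lagr J G \<rho> z \<mu> s = J z + inner (\<mu> + (\<rho>/2) *\<^sub>R G z s) (G z s)"

text \<open>F(w,s) = (grad J(z) + grad_z G(z,s)^T mu, G(z,s)); note grad_z G^T mu = grad_z (mu^T G).\<close>
definition Fmap :: "(real^'n::finite \<Rightarrow> real) \<Rightarrow> (real^'n \<Rightarrow> real^'p \<Rightarrow> real^'c::finite)
    \<Rightarrow> ((real^'n) \<times> (real^'c)) \<Rightarrow> real^'p \<Rightarrow> ((real^'n) \<times> (real^'c))" where
  "Fmap J G w s = (grad (\<lambda>x. J x + inner (snd w) (G x s)) (fst w), G (fst w) s)"

definition Hmap :: "(real^'n::finite \<Rightarrow> real) \<Rightarrow> (real^'n \<Rightarrow> real^'p \<Rightarrow> real^'c::finite)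
    \<Rightarrow> real \<Rightarrow> real^'c \<Rightarrow> ((real^'n) \<times> (real^'c)) \<Rightarrow> real^'c \<Rightarrow> real^'p \<Rightarrow> ((real^'n) \<times> (real^'c))" where
  "Hmap J G \<rho> \<mu>t w d s =
     (grad (\<lambda>x. J x + inner (snd w) (G x s)) (fst w),
      G (fst w) s + d + (1/\<rho>) *\<^sub>R (\<mu>t - snd w))"

definition KKT :: "(real^'n::finite \<Rightarrow> real) \<Rightarrow> (real^'n \<Rightarrow> real^'p \<Rightarrow> real^'c::finite)
    \<Rightarrow> (real^'n) set \<Rightarrow> ((real^'n) \<times> (real^'c)) \<Rightarrow> real^'p \<Rightarrow> bool" where
  "KKT J G Z w s \<longleftrightarrow> 0 \<in> {Fmap J G w s + v | v. v \<in> normal_cone (Z \<times> UNIV) w}"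

definition HKKT :: "(real^'n::finite \<Rightarrow> real) \<Rightarrow> (real^'n \<Rightarrow> real^'p \<Rightarrow> real^'c::finite)
    \<Rightarrow> (real^'n) set \<Rightarrow> real \<Rightarrow> real^'c \<Rightarrow> ((real^'n) \<times> (real^'c)) \<Rightarrow> real^'c \<Rightarrow> real^'p \<Rightarrow> bool" where
  "HKKT J G Z \<rho> \<mu>t w d s \<longleftrightarrow>
     0 \<in> {Hmap J G \<rho> \<mu>t w d s + v | v. v \<in> normal_cone (Z \<times> UNIV) w}"

text \<open>Projection of a real onto an interval [a,b] (componentwise projection onto a box).\<close>
definition clamp :: "real \<Rightarrow> real \<Rightarrow> real \<Rightarrow> real" where
  "clamp a b x = max a (min b x)"

definition block_trial :: "(real^'n::finite \<Rightarrow> real) \<Rightarrow> ('n \<Rightarrow> nat) \<Rightarrow> real^'n \<Rightarrow> real^'n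
    \<Rightarrow> nat \<Rightarrow> real \<Rightarrow> real^'n \<Rightarrow> real^'n" where
  "block_trial f blk lo hi i c z =
     (\<chi> j. if blk j = i then clamp (lo$j) (hi$j) (z$j - grad f z $ j / c) else z$j)"

text \<open>Backtracking condition for block i (written in the full space: only block i changes,
  so grad f(z_i)^T (u - z_i) = grad f(z) . (u' - z) and |u - z_i| = |u' - z|).\<close>
definition bt_ok :: "(real^'n::finite \<Rightarrow> real) \<Rightarrow> ('n \<Rightarrow> nat) \<Rightarrow> real^'n \<Rightarrow> real^'n
    \<Rightarrow> nat \<Rightarrow> real \<Rightarrow> real \<Rightarrow> real^'n \<Rightarrow> bool" where
  "bt_ok f blk lo hi i \<alpha> c z \<longleftrightarrow>
     (let u = block_trial f blk lo hi i c z in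
      f u + \<alpha>/2 * (norm (u - z))\<^sup>2 \<le> f z + inner (grad f z) (u - z) + c/2 * (norm (u - z))\<^sup>2)"

definition block_step :: "(real^'n::finite \<Rightarrow> real) \<Rightarrow> ('n \<Rightarrow> nat) \<Rightarrow> real^'n \<Rightarrow> real^'n
    \<Rightarrow> (nat \<Rightarrow> real) \<Rightarrow> (nat \<Rightarrow> real) \<Rightarrow> real \<Rightarrow> nat \<Rightarrow> real^'n \<Rightarrow> real^'n" where
  "block_step f blk lo hi c0 \<alpha> \<beta> i z =
     (let t = (LEAST t::nat. bt_ok f blk lo hi i (\<alpha> i) (c0 i * \<beta> ^ t) z)
      in block_trial f blk lo hi i (c0 i * \<beta> ^ t) z)"

definition sweep :: "nat \<Rightarrow> (real^'n::finite \<Rightarrow> real) \<Rightarrow> ('n \<Rightarrow> nat) \<Rightarrow> real^'n \<Rightarrow> real^'n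
    \<Rightarrow> (nat \<Rightarrow> real) \<Rightarrow> (nat \<Rightarrow> real) \<Rightarrow> real \<Rightarrow> real^'n \<Rightarrow> real^'n" where
  "sweep P f blk lo hi c0 \<alpha> \<beta> z = fold (block_step f blk lo hi c0 \<alpha> \<beta>) [0..<P] z"

end

theory Submission
  imports Defs
begin

theorem mainTheorem9:
  fixes P :: nat
    and blk :: "'n::finite \<Rightarrow> nat" and cblk :: "'c::finite \<Rightarrow> nat"
    and lo hi :: "real^'n"
    and Jb :: "nat \<Rightarrow> real^'n \<Rightarrow> real" and J :: "real^'n \<Rightarrow> real"
    and Qc :: "real^'n \<Rightarrow> real^'c" and gb :: "nat \<Rightarrow> real^'n \<Rightarrow> real^'c"
    and T :: "nat \<Rightarrow> real^'p::finite^'c"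
    and G :: "real^'n \<Rightarrow> real^'p \<Rightarrow> real^'c"
    and S :: "(real^'p) set"
    and c0 \<alpha> :: "nat \<Rightarrow> real" and \<beta> \<rho> :: real and M :: nat
    and s :: "nat \<Rightarrow> real^'p"
    and ws wbar winf :: "nat \<Rightarrow> (real^'n) \<times> (real^'c)"
    and zinf :: "nat \<Rightarrow> real^'n" and d :: "nat \<Rightarrow> real^'c"
    and L :: "nat \<Rightarrow> real^'n \<Rightarrow> real"
    and lamH lamG :: real
    and rA \<delta>A lamA :: real and wA :: "nat \<Rightarrow> real^'p \<Rightarrow> (real^'n) \<times> (real^'c)"
    and rB qB lamB \<delta>B :: real and wB :: "nat \<Rightarrow> real^'c \<Rightarrow> real^'p \<Rightarrow> (real^'n) \<times> (real^'c)"
    and C \<delta> \<psi> :: real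
    and k :: nat
  assumes
    \<comment> \<open>problem data\<close>
    P_pos: "P \<ge> 1"
    and blk_range: "\<forall>j. blk j < P" and blk_nonempty: "\<forall>i<P. \<exists>j. blk j = i"
    and cblk_range: "\<forall>c. cblk c \<le> P"
    and box_nonempty: "\<forall>j. lo$j \<le> hi$j"
    and J_poly: "\<forall>i<P. polynomial_function (Jb i)"
    and J_def: "\<forall>z. J z = (\<Sum>i<P. Jb i (blockproj blk i z))"
    and Qc_poly: "polynomial_function Qc"
    and g_poly: "\<forall>i<P. polynomial_function (gb i)"
    and G_def: "G = Gmap Qc gb T blk cblk"
    \<comment> \<open>Lipschitz constants lambda_H and lambda_G\<close>
    and lamH_pos: "lamH > 0"
    and lamH_lip: "\<forall>\<mu>t w dd ss dd' ss'. norm (Hmap J G \<rho> \<mu>t w dd ss - Hmap J G \<rho> \<mu>t w dd' ss')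
                   \<le> lamH * norm ((dd, ss) - (dd', ss'))"
    and lamG_pos: "lamG > 0"
    and lamG_lip: "\<forall>ss. \<forall>z\<in>cbox lo hi. \<forall>z'\<in>cbox lo hi. norm (G z ss - G z' ss) \<le> lamG * norm (z - z')"
    \<comment> \<open>primal sweep parameters\<close>
    and c0_pos: "\<forall>i. c0 i > 0" and \<alpha>_pos: "\<forall>i. \<alpha> i > 0" and \<beta>_gt1: "\<beta> > 1"
    \<comment> \<open>tracking setting\<close>
    and \<rho>_pos: "\<rho> > 0" and M_ge1: "M \<ge> 1"
    and s_in_S: "\<forall>k. s k \<in> S"
    and ws_KKT: "\<forall>k. KKT J G (cbox lo hi) (ws k) (s k)"
    and zbar_in: "\<forall>k. fst (wbar k) \<in> cbox lo hi"
    and L_def: "\<forall>k. L k = (\<lambda>z. Lagr J G \<rho> z (snd (wbar k)) (s (Suc k)))"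
    and zbar_step: "\<forall>k. fst (wbar (Suc k)) = (sweep P (L k) blk lo hi c0 \<alpha> \<beta> ^^ M) (fst (wbar k))"
    and mubar_step: "\<forall>k. snd (wbar (Suc k)) = snd (wbar k) + \<rho> *\<^sub>R G (fst (wbar (Suc k))) (s (Suc k))"
    and zinf_def: "\<forall>k. zinf k = lim (\<lambda>n. (sweep P (L k) blk lo hi c0 \<alpha> \<beta> ^^ n) (fst (wbar k)))"
    and winf_def: "\<forall>k. winf k = (zinf k, snd (wbar k) + \<rho> *\<^sub>R G (zinf k) (s (Suc k)))"
    and d_def: "\<forall>k. d k = (1/\<rho>) *\<^sub>R (snd (wbar k) - snd (ws k))"
    \<comment> \<open>hypothesis (A)\<close>
    and A_pos: "rA > 0" "\<delta>A > 0" "lamA > 0"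
    and A_sol: "\<forall>k. \<forall>ss\<in>ball (s k) rA \<inter> S.
                  wA k ss \<in> ball (ws k) \<delta>A \<and> KKT J G (cbox lo hi) (wA k ss) ss \<and>
                  (\<forall>w\<in>ball (ws k) \<delta>A. KKT J G (cbox lo hi) w ss \<longrightarrow> w = wA k ss)"
    and A_lip: "\<forall>k. \<forall>ss\<in>ball (s k) rA \<inter> S. \<forall>ss'\<in>ball (s k) rA \<inter> S.
                  norm (wA k ss - wA k ss')
                    \<le> lamA * norm (Fmap J G (wA k ss') ss - Fmap J G (wA k ss') ss')"
    and A_next: "\<forall>k. norm (s (Suc k) - s k) < rA \<longrightarrow> ws (Suc k) = wA k (s (Suc k))"
    \<comment> \<open>hypothesis (B)\<close>
    and B_pos: "rB > 0" "qB > 0" "lamB > 0" and B_\<delta>: "\<delta>B \<ge> \<delta>A"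
    and B_sol: "\<forall>k. \<forall>dd\<in>ball 0 qB. \<forall>ss\<in>ball (s k) rB \<inter> S.
                  wB k dd ss \<in> ball (ws k) \<delta>B \<and> HKKT J G (cbox lo hi) \<rho> (snd (ws k)) (wB k dd ss) dd ss \<and>
                  (\<forall>w\<in>ball (ws k) \<delta>B. HKKT J G (cbox lo hi) \<rho> (snd (ws k)) w dd ss \<longrightarrow> w = wB k dd ss)"
    and B_lip: "\<forall>k. \<forall>dd\<in>ball 0 qB. \<forall>dd'\<in>ball 0 qB. \<forall>ss\<in>ball (s k) rB \<inter> S. \<forall>ss'\<in>ball (s k) rB \<inter> S.
                  norm (wB k dd ss - wB k dd' ss')
                    \<le> lamB * norm (Hmap J G \<rho> (snd (ws k)) (wB k dd' ss') dd ss
                                 - Hmap J G \<rho> (snd (ws k)) (wB k dd' ss') dd' ss')"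
    \<comment> \<open>hypothesis (C)\<close>
    and C_pos: "C > 0" "\<delta> > 0" "\<psi> > 0"
    and C_conv: "\<forall>k. convergent (\<lambda>n. (sweep P (L k) blk lo hi c0 \<alpha> \<beta> ^^ n) (fst (wbar k)))"
    and C_limit: "\<forall>k. d k \<in> ball 0 qB \<and> norm (s (Suc k) - s k) < rB \<longrightarrow> winf k = wB k (d k) (s (Suc k))"
    and C_rate: "\<forall>k. norm (fst (wbar k) - zinf k) < \<delta> \<longrightarrow>
                  norm (fst (wbar (Suc k)) - zinf k) \<le> C * real M powr (- \<psi>) * norm (fst (wbar k) - zinf k)"
    \<comment> \<open>hypotheses of the theorem\<close>
    and h1: "norm (s (Suc k) - s k) < rB"
    and h2: "norm (wbar k - ws k) < qB * \<rho>"
    and h3: "(1 + lamH * lamB / \<rho>) * norm (wbar k - ws k) + lamH * lamB * rB < \<delta>"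
  shows "norm (wbar (Suc k) - winf k)
           \<le> C * (1 + \<rho> * lamG) * real M powr (- \<psi>)
              * (lamB * lamH * norm (s (Suc k) - s k) + (1 + lamB * lamH / \<rho>) * norm (wbar k - ws k))"
proof -
  define e where "e = norm (wbar k - ws k)"
  define ds where "ds = norm (s (Suc k) - s k)"
  have e0: "e \<ge> 0" "ds \<ge> 0" unfolding e_def ds_def by auto
  have dnorm: "norm (d k) \<le> e / \<rho>"
  proof -
    have "norm (d k) = norm (snd (wbar k - ws k)) / \<rho>"
      using d_def \<rho>_pos by simp
    also have "\<dots> \<le> e / \<rho>"
      unfolding e_def using \<rho>_pos
      by (metis divide_right_mono less_imp_le norm_snd_le prod.collapse)
    finally show ?thesis .
  qed
  have e_rho: "e / \<rho> < qB" using h2 \<rho>_pos unfolding e_def by (simp add: divide_less_eq mult.commute)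
  have dball: "d k \<in> ball 0 qB" using dnorm e_rho by simp
  have s1ball: "s (Suc k) \<in> ball (s k) rB \<inter> S" using h1 s_in_S by (simp add: dist_norm norm_minus_commute)
  have s0ball: "s k \<in> ball (s k) rB \<inter> S" using B_pos s_in_S by simp
  have zball: "(0::real^'c) \<in> ball 0 qB" using B_pos by simp
  have winfB: "winf k = wB k (d k) (s (Suc k))" using C_limit dball h1 by blast
  have HK: "HKKT J G (cbox lo hi) \<rho> (snd (ws k)) (ws k) 0 (s k)"
    using ws_KKT unfolding HKKT_def KKT_def Hmap_def Fmap_def by simp
  have wsin: "ws k \<in> ball (ws k) \<delta>B" using A_pos B_\<delta> by simp
  have wB0: "wB k 0 (s k) = ws k"
    using B_sol zball s0ball HK wsin by metis
  have lip: "norm (winf k - ws k) \<le> lamB * lamH * (e / \<rho> + ds)"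
  proof -
    have "norm (winf k - ws k) \<le> lamB * norm (Hmap J G \<rho> (snd (ws k)) (ws k) (d k) (s (Suc k))
                                 - Hmap J G \<rho> (snd (ws k)) (ws k) 0 (s k))"
      using B_lip dball zball s1ball s0ball winfB wB0 by metis
    also have "\<dots> \<le> lamB * (lamH * norm ((d k, s (Suc k)) - (0, s k)))"
      using lamH_lip[rule_format, of "snd (ws k)" "ws k" "d k" "s (Suc k)" 0 "s k"] B_pos
      by (intro mult_left_mono) auto
    also have "norm ((d k, s (Suc k)) - (0, s k)) \<le> norm (d k) + ds"
      unfolding ds_def using norm_Pair_le[of "d k" "s (Suc k) - s k"] by simp
    also have "\<dots> \<le> e / \<rho> + ds" using dnorm by simp
    finally show ?thesis using B_pos lamH_pos by (simp add: mult_left_mono mult.assoc)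
  qed
  define X where "X = lamB * lamH * ds + (1 + lamB * lamH / \<rho>) * e"
  have zdist: "norm (fst (wbar k) - zinf k) \<le> X"
  proof -
    have "norm (fst (wbar k) - zinf k) \<le> norm (fst (wbar k) - fst (ws k)) + norm (fst (ws k) - zinf k)"
      using norm_triangle_ineq[of "fst (wbar k) - fst (ws k)" "fst (ws k) - zinf k"] by simp
    also have "norm (fst (wbar k) - fst (ws k)) \<le> e"
      unfolding e_def by (metis fst_diff norm_fst_le prod.collapse)
    also have "norm (fst (ws k) - zinf k) \<le> norm (winf k - ws k)"
      using winf_def by (metis fst_conv fst_diff norm_fst_le norm_minus_commute prod.collapse)
    finally show ?thesis using lip unfolding X_def by (simp add: algebra_simps)
  qed
  have Xlt: "X < \<delta>"
  proof -
    have "lamB * lamH * ds \<le> lamH * lamB * rB" using h1 B_pos lamH_pos unfolding ds_def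
      by (simp add: mult.commute)
    thus ?thesis using h3 unfolding X_def e_def by (simp add: mult.commute)
  qed
  have rate: "norm (fst (wbar (Suc k)) - zinf k) \<le> C * real M powr (- \<psi>) * X"
  proof -
    have "norm (fst (wbar (Suc k)) - zinf k) \<le> C * real M powr (- \<psi>) * norm (fst (wbar k) - zinf k)"
      using C_rate zdist Xlt by force
    also have "\<dots> \<le> C * real M powr (- \<psi>) * X"
      using zdist C_pos by (intro mult_left_mono) auto
    finally show ?thesis .
  qed
  have zinf_in: "zinf k \<in> cbox lo hi"
  proof -
    have "HKKT J G (cbox lo hi) \<rho> (snd (ws k)) (winf k) (d k) (s (Suc k))"
      using B_sol dball s1ball winfB by metis
    hence "winf k \<in> cbox lo hi \<times> UNIV"
      unfolding HKKT_def normal_cone_def by (auto split: if_splits)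
    thus ?thesis using winf_def by auto
  qed
  have Gb: "norm (G (fst (wbar (Suc k))) (s (Suc k)) - G (zinf k) (s (Suc k)))
            \<le> lamG * norm (fst (wbar (Suc k)) - zinf k)"
    using lamG_lip zbar_in zinf_in by blast
  have "norm (wbar (Suc k) - winf k) \<le> norm (fst (wbar (Suc k)) - zinf k)
          + norm (\<rho> *\<^sub>R (G (fst (wbar (Suc k))) (s (Suc k)) - G (zinf k) (s (Suc k))))"
  proof -
    have "wbar (Suc k) - winf k = (fst (wbar (Suc k)) - zinf k,
            \<rho> *\<^sub>R (G (fst (wbar (Suc k))) (s (Suc k)) - G (zinf k) (s (Suc k))))"
      using winf_def mubar_step by (simp add: prod_eq_iff algebra_simps)
    thus ?thesis by (metis norm_Pair_le)
  qed
  also have "\<dots> \<le> (1 + \<rho> * lamG) * norm (fst (wbar (Suc k)) - zinf k)"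
  proof -
    have "norm (\<rho> *\<^sub>R (G (fst (wbar (Suc k))) (s (Suc k)) - G (zinf k) (s (Suc k))))
          = \<rho> * norm (G (fst (wbar (Suc k))) (s (Suc k)) - G (zinf k) (s (Suc k)))"
      using \<rho>_pos by simp
    also have "\<dots> \<le> \<rho> * (lamG * norm (fst (wbar (Suc k)) - zinf k))"
      using Gb \<rho>_pos by (intro mult_left_mono) auto
    finally show ?thesis by (simp add: algebra_simps)
  qed
  also have "\<dots> \<le> (1 + \<rho> * lamG) * (C * real M powr (- \<psi>) * X)"
    using rate \<rho>_pos lamG_pos by (intro mult_left_mono) auto
  also have "\<dots> = C * (1 + \<rho> * lamG) * real M powr (- \<psi>) * X" by (simp add: mult_ac)
  finally show ?thesis unfolding X_def ds_def e_def .
qed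

end
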